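(* For all $\mathit{in}_1, \mathit{in}_2, \mathit{in}_3 \in \mathcal{T}$, if $\mathit{in}_3 \hookrightarrow \mathit{in}_2$ and $\mathit{in}_2 \hookrightarrow \mathit{in}_1$, then $\mathit{in}_3 \hookrightarrow \mathit{in}_1$.
   Context: $\mathcal{T}$ is a finite set of inputs. Each input $\mathit{in}$ covers a nonempty finite set $\mathrm{Obj}(\mathit{in})$ of objectives and has a cost $c(\mathit{in}) > 0$. For $S \subseteq \mathcal{T}$, $\mathrm{Obj}(S) = \bigcup_{\mathit{in} \in S} \mathrm{Obj}(\mathit{in})$ and $c(S) = \sum_{\mathit{in} \in S} c(\mathit{in})$. There are no duplicates: two distinct inputs of $\mathcal{T}$ never have both the same set of covered objectives and the same cost. Local dominance of an input by a subset: for $\mathit{in} \in \mathcal{T}$ and $S \subseteq \mathcal{T}$, $\mathit{in} \sqsubseteq S$ iff $\mathit{in} \notin S$, $\mathrm{Obj}(\mathit{in}) \subseteq \mathrm{Obj}(S)$ and $c(\mathit{in}) \ge c(S)$. Local dominance between inputs: $\mathit{in}_1 \hookrightarrow \mathit{in}_2$ iff there exists $S \subseteq \mathcal{T}$ with $\mathit{in}_1 \in S$ and $\mathit{in}_2 \sqsubseteq S$. *)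

theory Defs
  imports Complex_Main
begin

definition ObjS :: "('i \<Rightarrow> 'o set) \<Rightarrow> 'i set \<Rightarrow> 'o set" where
  "ObjS Obj S = (\<Union>x\<in>S. Obj x)"

definition costS :: "('i \<Rightarrow> real) \<Rightarrow> 'i set \<Rightarrow> real" where
  "costS c S = (\<Sum>x\<in>S. c x)"

definition well_formed_inputs :: "'i set \<Rightarrow> ('i \<Rightarrow> 'o set) \<Rightarrow> ('i \<Rightarrow> real) \<Rightarrow> bool" where
  "well_formed_inputs T Obj c \<longleftrightarrow>
     finite T \<and>
     (\<forall>x\<in>T. Obj x \<noteq> {} \<and> finite (Obj x) \<and> c x > 0) \<and>
     (\<forall>x\<in>T. \<forall>y\<in>T. x \<noteq> y \<longrightarrow> \<not> (Obj x = Obj y \<and> c x = c y))"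

definition ldom_set :: "('i \<Rightarrow> 'o set) \<Rightarrow> ('i \<Rightarrow> real) \<Rightarrow> 'i \<Rightarrow> 'i set \<Rightarrow> bool" where
  "ldom_set Obj c i S \<longleftrightarrow> i \<notin> S \<and> Obj i \<subseteq> ObjS Obj S \<and> c i \<ge> costS c S"

definition ldom :: "'i set \<Rightarrow> ('i \<Rightarrow> 'o set) \<Rightarrow> ('i \<Rightarrow> real) \<Rightarrow> 'i \<Rightarrow> 'i \<Rightarrow> bool" where
  "ldom T Obj c i1 i2 \<longleftrightarrow> (\<exists>S. S \<subseteq> T \<and> i1 \<in> S \<and> ldom_set Obj c i2 S)"

end

theory Submission
  imports Defs
begin

theorem mainTheorem8:
  fixes T :: "'i set" and Obj :: "'i \<Rightarrow> 'o set" and c :: "'i \<Rightarrow> real"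
  assumes "well_formed_inputs T Obj c"
    and "in1 \<in> T" and "in2 \<in> T" and "in3 \<in> T"
    and "ldom T Obj c in3 in2" and "ldom T Obj c in2 in1"
  shows "ldom T Obj c in3 in1"
proof -
  have fT: "finite T" and pos: "\<And>x. x \<in> T \<Longrightarrow> c x > 0"
   and nd: "\<And>x y. x \<in> T \<Longrightarrow> y \<in> T \<Longrightarrow> Obj x = Obj y \<Longrightarrow> c x = c y \<Longrightarrow> x = y"
    using assms(1) unfolding well_formed_inputs_def by blast+
  obtain S1 where S1: "S1 \<subseteq> T" "in3 \<in> S1" "in2 \<notin> S1" "Obj in2 \<subseteq> ObjS Obj S1"
      "c in2 \<ge> costS c S1"
    using assms(5) unfolding ldom_def ldom_set_def by blast
  obtain S2 where S2: "S2 \<subseteq> T" "in2 \<in> S2" "in1 \<notin> S2" "Obj in1 \<subseteq> ObjS Obj S2"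
      "c in1 \<ge> costS c S2"
    using assms(6) unfolding ldom_def ldom_set_def by blast
  have f1: "finite S1" using finite_subset[OF S1(1) fT] .
  have f2: "finite S2" using finite_subset[OF S2(1) fT] .
  have sumge: "\<And>A B. A \<subseteq> B \<Longrightarrow> B \<subseteq> T \<Longrightarrow> sum c A \<le> sum c B"
  proof -
    fix A B assume h: "A \<subseteq> B" "B \<subseteq> T"
    have "finite B" using finite_subset[OF h(2) fT] .
    thus "sum c A \<le> sum c B" by (rule sum_mono2) (use h pos in \<open>auto intro: less_imp_le\<close>)
  qed
  have sumgt: "\<And>A B x. A \<subseteq> B \<Longrightarrow> B \<subseteq> T \<Longrightarrow> x \<in> B \<Longrightarrow> x \<notin> A \<Longrightarrow> sum c A + c x \<le> sum c B"
  proof -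
    fix A B x assume h: "A \<subseteq> B" "B \<subseteq> T" "x \<in> B" "x \<notin> A"
    have "insert x A \<subseteq> B" using h by blast
    hence "sum c (insert x A) \<le> sum c B" by (rule sumge) (rule h(2))
    moreover have "finite A" using finite_subset[OF order_trans[OF h(1) h(2)] fT] .
    moreover have "sum c (insert x A) = c x + sum c A" by (rule sum.insert) fact+
    ultimately show "sum c A + c x \<le> sum c B" by linarith
  qed
  have c2: "c in2 \<le> costS c S2" unfolding costS_def using sumge[of "{in2}" S2] S2(1,2) by simp
  have c3: "c in3 \<le> costS c S1" unfolding costS_def using sumge[of "{in3}" S1] S1(1,2) by simp
  have n1: "in1 \<notin> S1"
  proof
    assume i1: "in1 \<in> S1"
    show False
    proof (cases "in3 = in1")
      case True
      have a: "c in1 \<le> costS c S1" using c3 True by simp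
      have e1: "costS c S1 = c in1" "c in1 = c in2" "costS c S2 = c in2"
        using a S1(5) S2(5) c2 by linarith+
      have "S2 = {in2}"
      proof (rule ccontr)
        assume "S2 \<noteq> {in2}"
        then obtain y where y: "y \<in> S2" "y \<noteq> in2" using S2(2) by blast
        have "sum c {in2} + c y \<le> sum c S2" using sumgt[of "{in2}" S2 y] y S2 by auto
        thus False using e1 pos[of y] y S2(1) unfolding costS_def by auto
      qed
      moreover have "S1 = {in1}"
      proof (rule ccontr)
        assume "S1 \<noteq> {in1}"
        then obtain y where y: "y \<in> S1" "y \<noteq> in1" using i1 by blast
        have "sum c {in1} + c y \<le> sum c S1" using sumgt[of "{in1}" S1 y] y S1 i1 by auto
        thus False using e1 pos[of y] y S1(1) unfolding costS_def by auto
      qed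
      ultimately have "Obj in1 = Obj in2" using S1(4) S2(4) unfolding ObjS_def by auto
      hence "in1 = in2" using nd[OF assms(2) assms(3)] e1(2) by blast
      thus False using i1 S1(3) by simp
    next
      case False
      have "sum c {in1} + c in3 \<le> sum c S1" using sumgt[of "{in1}" S1 in3] False S1 i1 by auto
      thus False using S1(5) S2(5) c2 pos[OF assms(4)] unfolding costS_def by auto
    qed
  qed
  define S where "S = (S2 - {in2}) \<union> S1"
  have "S \<subseteq> T" using S1 S2 S_def by auto
  moreover have "in3 \<in> S" using S1 S_def by auto
  moreover have "in1 \<notin> S" using n1 S2 S_def by auto
  moreover have "Obj in1 \<subseteq> ObjS Obj S" using S1(4) S2(4) unfolding S_def ObjS_def by blast
  moreover have "costS c S \<le> c in1"
  proof -
    have "sum c ((S2 - {in2}) \<inter> S1) \<ge> 0"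
      by (rule sum_nonneg) (use pos S1(1) in \<open>auto intro: less_imp_le\<close>)
    hence "costS c S \<le> sum c (S2 - {in2}) + sum c S1"
      unfolding S_def costS_def using sum_Un[of "S2 - {in2}" S1 c] f1 f2 by simp
    also have "sum c (S2 - {in2}) = sum c S2 - c in2" using f2 S2(2) by (simp add: sum_diff1)
    finally show ?thesis using S1(5) S2(5) unfolding costS_def by linarith
  qed
  ultimately show ?thesis unfolding ldom_def ldom_set_def by blast
qed

end
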